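(* Let $\Omega\subseteq\mathbb{R}^N$ be open and bounded and let $T$ and $C$ be as in the context (with zero set of $\eta$ equal to $\partial\Omega$). Then $T$ is a bounded linear operator from $L^1(\Omega)$ to $L^1(\Omega)$ if and only if $$\mathcal{K}:=\sup_{y\in\Omega}\int_\Omega C(x)\rho\Big(\frac{x-y}{\eta(x)}\Big)\,dx<\infty.$$
   Context: $\rho\in C_c^\infty(\mathbb{R}^N)$ satisfies $0\le\rho\le1$, $\rho(x)=0$ iff $|x|\ge1$, $\rho$ is radially symmetric, and $\rho(x)\ge\rho(1/2)$ for all $|x|<1/2$. Set $M_\rho:=(\int_{B_1(0)}\rho(y)\,dy)^{-1}$. Let $\eta\in C^\infty(\mathbb{R}^N)$ be non-negative with $\eta^{-1}(\{0\})=\partial\Omega$, all derivatives of $\eta$ vanishing on $\partial\Omega$, and $\eta(x)<\mathrm{dist}(x,\partial\Omega)$ for every $x\notin\partial\Omega$. For $x\in\Omega$ let $C(x):=M_\rho/\eta(x)^N$, and for $f\in L^1_{loc}(\Omega)$ let $Tf(x):=C(x)\int_\Omega\rho\big(\frac{x-y}{\eta(x)}\big)f(y)\,dy$. *)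

theory Defs
  imports "HOL-Analysis.Analysis"
begin

text \<open>Iterated directional (Frechet) derivatives: iter_dderiv f [v1,...,vk] is
  the k-th derivative of f applied to the directions v1,...,vk.\<close>
fun iter_dderiv :: "('a::real_normed_vector \<Rightarrow> real) \<Rightarrow> 'a list \<Rightarrow> 'a \<Rightarrow> real" where
  "iter_dderiv f [] = f"
| "iter_dderiv f (v # vs) = (\<lambda>x. frechet_derivative (iter_dderiv f vs) (at x) v)"

definition smooth_fun :: "('a::real_normed_vector \<Rightarrow> real) \<Rightarrow> bool" where
  "smooth_fun f \<longleftrightarrow> (\<forall>vs x. iter_dderiv f vs differentiable (at x))"

definition M_rho :: "('a::euclidean_space \<Rightarrow> real) \<Rightarrow> real" where
  "M_rho \<rho> = 1 / (LINT y:ball 0 1|lebesgue. \<rho> y)"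

definition Cfun :: "('a::euclidean_space \<Rightarrow> real) \<Rightarrow> ('a \<Rightarrow> real) \<Rightarrow> 'a \<Rightarrow> real" where
  "Cfun \<rho> \<eta> x = M_rho \<rho> / (\<eta> x) ^ DIM('a)"

definition Top :: "('a::euclidean_space \<Rightarrow> real) \<Rightarrow> ('a \<Rightarrow> real) \<Rightarrow> 'a set \<Rightarrow> ('a \<Rightarrow> real) \<Rightarrow> 'a \<Rightarrow> real" where
  "Top \<rho> \<eta> \<Omega> f x = Cfun \<rho> \<eta> x * (LINT y:\<Omega>|lebesgue. \<rho> ((1 / \<eta> x) *\<^sub>R (x - y)) * f y)"

end

theory Submission
  imports Defs
begin

lemma norm_integral_le_nn:
  fixes h :: "'a \<Rightarrow> real"
  shows "ennreal (norm (integral\<^sup>L M h)) \<le> (\<integral>\<^sup>+x. norm (h x) \<partial>M)"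
proof (cases "integrable M h")
  case True then show ?thesis using integral_norm_bound_ennreal by blast
next
  case False then show ?thesis by (simp add: not_integrable_integral_eq)
qed

lemma Cfun_nonneg:
  fixes \<rho> \<eta> :: "'a::euclidean_space \<Rightarrow> real"
  assumes "\<And>x. 0 \<le> \<rho> x" "\<And>x. 0 \<le> \<eta> x"
  shows "0 \<le> Cfun \<rho> \<eta> x"
proof -
  have "0 \<le> (LINT y:ball 0 1|lebesgue. \<rho> y)"
    unfolding set_lebesgue_integral_def
    by (rule integral_nonneg_AE) (simp add: assms indicator_def)
  then have "0 \<le> M_rho \<rho>" by (simp add: M_rho_def)
  then show ?thesis unfolding Cfun_def using assms(2)[of x] by simp
qed

lemma smooth_cont: assumes "smooth_fun f" shows "continuous_on UNIV f"
proof -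
  have "\<And>x. f differentiable (at x)" using assms unfolding smooth_fun_def
    by (metis iter_dderiv.simps(1))
  then show ?thesis by (simp add: continuous_at_imp_continuous_on differentiable_imp_continuous_within)
qed

lemma smooth_meas: assumes "smooth_fun f" shows "f \<in> borel_measurable borel"
  using smooth_cont[OF assms] borel_measurable_continuous_onI by blast

lemma dir1:
  fixes \<Omega> :: "'a::euclidean_space set" and \<rho> \<eta> :: "'a \<Rightarrow> real"
  assumes Oo: "open \<Omega>"
    and rc: "continuous_on UNIV \<rho>"
    and rnn: "\<And>x. 0 \<le> \<rho> x" and rle: "\<And>x. \<rho> x \<le> 1"
    and H: "\<exists>c. \<forall>f. set_integrable lebesgue \<Omega> f \<longrightarrow>
              set_integrable lebesgue \<Omega> (Top \<rho> \<eta> \<Omega> f) \<and>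
              (LINT x:\<Omega>|lebesgue. \<bar>Top \<rho> \<eta> \<Omega> f x\<bar>) \<le> c * (LINT x:\<Omega>|lebesgue. \<bar>f x\<bar>)"
  shows "(SUP y\<in>\<Omega>. \<integral>\<^sup>+ x\<in>\<Omega>. ennreal (Cfun \<rho> \<eta> x * \<rho> ((1 / \<eta> x) *\<^sub>R (x - y))) \<partial>lebesgue) < \<infinity>"
proof -
  obtain c where H: "\<And>f. set_integrable lebesgue \<Omega> f \<Longrightarrow>
              set_integrable lebesgue \<Omega> (Top \<rho> \<eta> \<Omega> f) \<and>
              (LINT x:\<Omega>|lebesgue. \<bar>Top \<rho> \<eta> \<Omega> f x\<bar>) \<le> c * (LINT x:\<Omega>|lebesgue. \<bar>f x\<bar>)"
    using H by blast
  have Om: "\<Omega> \<in> sets lebesgue" using Oo by simp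
  have bound: "(\<integral>\<^sup>+ x\<in>\<Omega>. ennreal (Cfun \<rho> \<eta> x * \<rho> ((1 / \<eta> x) *\<^sub>R (x - y0))) \<partial>lebesgue) \<le> ennreal c"
    if y0: "y0 \<in> \<Omega>" for y0
  proof -
    obtain r0 where r0: "r0 > 0" "ball y0 r0 \<subseteq> \<Omega>" using Oo y0 openE by blast
    define r where "r n = r0 / Suc n" for n :: nat
    define B where "B n = ball y0 (r n)" for n
    define m where "m n = measure lborel (B n)" for n
    have rpos: "r n > 0" for n using r0 by (simp add: r_def)
    have BO: "B n \<subseteq> \<Omega>" for n
      using r0 unfolding B_def r_def
    proof -
      have "r0 / real (Suc n) \<le> r0 / 1" by (rule divide_left_mono) (use r0 in auto)
      then show "ball y0 (r0 / real (Suc n)) \<subseteq> \<Omega>" using r0(2) subset_ball by fastforce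
    qed
    have mpos: "m n > 0" for n unfolding m_def B_def using content_ball_pos rpos by blast
    have Bs: "B n \<in> sets lborel" for n by (simp add: B_def)
    have Bfin: "emeasure lborel (B n) < \<infinity>" for n unfolding B_def by (rule emeasure_bounded_finite) simp
    define fn where "fn n y = indicator (B n) y / m n" for n y
    have fnm: "fn n \<in> borel_measurable lebesgue" for n
    proof -
      have "B n \<in> sets lebesgue" using Bs[of n] by (intro sets_completionI_sets) 
      then show ?thesis unfolding fn_def[abs_def]
        by (intro borel_measurable_divide borel_measurable_indicator borel_measurable_const)
    qed
    have fn_nn: "0 \<le> fn n y" for n y using mpos[of n] by (simp add: fn_def)
    have fn_eq: "indicator \<Omega> y *\<^sub>R fn n y = indicator (B n) y * (1 / m n)" for n y
      using BO[of n] by (auto simp: fn_def indicator_def)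
    have fint: "set_integrable lebesgue \<Omega> (fn n)" for n
      unfolding set_integrable_def fn_eq
      using Bs Bfin by (intro integrable_mult_left) (simp add: integrable_completion)
    have fone: "(LINT y:\<Omega>|lebesgue. fn n y) = 1" for n
    proof -
      have "(LINT y:\<Omega>|lebesgue. fn n y) = (\<integral> y. indicator (B n) y \<partial>lebesgue) * (1 / m n)"
        unfolding set_lebesgue_integral_def fn_eq by simp
      also have "(\<integral> y. indicator (B n) y \<partial>lebesgue) = m n"
        using Bs[of n] by (simp add: m_def)
      finally show ?thesis using mpos[of n] by simp
    qed
    have fone': "(LINT y:\<Omega>|lebesgue. \<bar>fn n y\<bar>) = 1" for n
      using fone fn_nn by simp
    define u where "u n x = ennreal \<bar>indicator \<Omega> x *\<^sub>R Top \<rho> \<eta> \<Omega> (fn n) x\<bar>" for n x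
    have Ti: "integrable lebesgue (\<lambda>x. indicator \<Omega> x *\<^sub>R Top \<rho> \<eta> \<Omega> (fn n) x)" for n
      using H[OF fint[of n]] unfolding set_integrable_def by blast
    have um: "u n \<in> borel_measurable lebesgue" for n
      unfolding u_def using Ti[of n] by measurable
    have ule: "integral\<^sup>N lebesgue (u n) \<le> ennreal c" for n
    proof -
      have "integral\<^sup>N lebesgue (u n) = ennreal (\<integral> x. \<bar>indicator \<Omega> x *\<^sub>R Top \<rho> \<eta> \<Omega> (fn n) x\<bar> \<partial>lebesgue)"
        unfolding u_def by (rule nn_integral_eq_integral) (use Ti[of n] in auto)
      also have "(\<integral> x. \<bar>indicator \<Omega> x *\<^sub>R Top \<rho> \<eta> \<Omega> (fn n) x\<bar> \<partial>lebesgue) = (LINT x:\<Omega>|lebesgue. \<bar>Top \<rho> \<eta> \<Omega> (fn n) x\<bar>)"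
        unfolding set_lebesgue_integral_def by (simp add: abs_mult)
      also have "\<dots> \<le> c" using H[OF fint[of n]] fone'[of n] by simp
      finally show ?thesis by (simp add: ennreal_leI)
    qed
    have pw: "ennreal (Cfun \<rho> \<eta> x * \<rho> ((1 / \<eta> x) *\<^sub>R (x - y0))) * indicator \<Omega> x \<le> liminf (\<lambda>n. u n x)" for x
    proof (cases "x \<in> \<Omega>")
      case False then show ?thesis by simp
    next
      case xO: True
      define Cx where "Cx = Cfun \<rho> \<eta> x"
      define \<phi> where "\<phi> y = \<rho> ((1 / \<eta> x) *\<^sub>R (x - y))" for y
      show ?thesis unfolding le_Liminf_iff
      proof (intro allI impI)
        fix z assume z: "z < ennreal (Cfun \<rho> \<eta> x * \<rho> ((1 / \<eta> x) *\<^sub>R (x - y0))) * indicator \<Omega> x"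
        then have z': "z < ennreal (Cx * \<phi> y0)" using xO by (simp add: Cx_def \<phi>_def)
        obtain t where t01: "z = ennreal t" "0 \<le> t"
          using z' by (cases z rule: ennreal_cases) auto
        have t: "z = ennreal t" "0 \<le> t" "t < Cx * \<phi> y0"
          using t01 z' ennreal_less_iff by auto
        have p0: "0 \<le> \<phi> y0" using rnn by (simp add: \<phi>_def)
        have cp: "0 < Cx * \<phi> y0" using t by linarith
        have Cp1: "Cx > 0" using cp p0 by (auto simp: zero_less_mult_iff)
        have Cp2: "\<phi> y0 > 0" using cp p0 by (auto simp: zero_less_mult_iff)
        note Cp = Cp1 Cp2
        define a where "a = (t / Cx + \<phi> y0) / 2"
        have ta: "t < Cx * a" using t Cp by (simp add: a_def field_simps)
        have ap: "a < \<phi> y0" using t Cp by (simp add: a_def field_simps)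
        have a0: "0 \<le> a" using t Cp by (simp add: a_def)
        have phc: "continuous_on UNIV \<phi>" unfolding \<phi>_def
          by (rule continuous_on_compose2[OF rc]) (auto intro!: continuous_intros)
        have "isCont \<phi> y0" using phc by (simp add: continuous_on_eq_continuous_at)
        then have "eventually (\<lambda>y. a < \<phi> y) (at y0)"
          using ap by (simp add: isCont_def order_tendstoD(1))
        then obtain d where d: "d > 0" "\<And>y. y \<noteq> y0 \<Longrightarrow> dist y y0 < d \<Longrightarrow> a < \<phi> y"
          unfolding eventually_at by auto
        have dB: "\<And>y. dist y y0 < d \<Longrightarrow> a < \<phi> y" using d ap by (metis)
        obtain N :: nat where N: "r0 / d < N" using reals_Archimedean2 by blast
        show "eventually (\<lambda>n. z < u n x) sequentially"
          unfolding eventually_sequentially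
        proof (intro exI allI impI)
          fix n assume "N \<le> n"
          then have "r0 / d < Suc n" using N by linarith
          then have rd: "r n < d" using d r0 by (simp add: r_def field_simps)
          have phm: "\<phi> \<in> borel_measurable lebesgue"
            by (rule measurable_completion) (simp add: borel_measurable_continuous_onI phc)
          have pfi: "set_integrable lebesgue \<Omega> (\<lambda>y. \<phi> y * fn n y)"
            unfolding set_integrable_def
            apply (rule Bochner_Integration.integrable_bound[OF fint[of n, unfolded set_integrable_def]])
             apply (intro borel_measurable_scaleR borel_measurable_indicator borel_measurable_times phm fnm Om)
            apply (rule AE_I2)
            using rnn rle fn_nn by (auto simp: \<phi>_def indicator_def abs_mult intro!: mult_left_le_one_le)
          have "(LINT y:\<Omega>|lebesgue. a * fn n y) \<le> (LINT y:\<Omega>|lebesgue. \<phi> y * fn n y)"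
          proof (rule set_integral_mono)
            show "set_integrable lebesgue \<Omega> (\<lambda>y. a * fn n y)"
              using fint[of n] by (simp add: set_integrable_mult_right)
            show "set_integrable lebesgue \<Omega> (\<lambda>y. \<phi> y * fn n y)" by (rule pfi)
            fix y assume "y \<in> \<Omega>"
            show "a * fn n y \<le> \<phi> y * fn n y"
            proof (cases "y \<in> B n")
              case True
              then have "dist y y0 < d" using rd by (simp add: B_def dist_commute)
              then show ?thesis using dB fn_nn by (intro mult_right_mono) (auto intro: less_imp_le)
            next
              case False then show ?thesis by (simp add: fn_def)
            qed
          qed
          then have "a \<le> (LINT y:\<Omega>|lebesgue. \<phi> y * fn n y)" using fone[of n] by simp
          then have "Cx * a \<le> Top \<rho> \<eta> \<Omega> (fn n) x"
            unfolding Top_def Cx_def[symmetric] \<phi>_def[symmetric]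
            using Cp by (intro mult_left_mono) auto
          then have "t < \<bar>Top \<rho> \<eta> \<Omega> (fn n) x\<bar>" using ta by linarith
          then show "z < u n x" using t xO by (simp add: u_def ennreal_less_iff)
        qed
      qed
    qed
    have "(\<integral>\<^sup>+ x\<in>\<Omega>. ennreal (Cfun \<rho> \<eta> x * \<rho> ((1 / \<eta> x) *\<^sub>R (x - y0))) \<partial>lebesgue)
        \<le> (\<integral>\<^sup>+ x. liminf (\<lambda>n. u n x) \<partial>lebesgue)"
      by (intro nn_integral_mono pw)
    also have "\<dots> \<le> liminf (\<lambda>n. integral\<^sup>N lebesgue (u n))"
      by (rule nn_integral_liminf) (rule um)
    also have "\<dots> \<le> ennreal c"
      by (rule Liminf_le) (auto intro!: always_eventually ule)
    finally show ?thesis .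
  qed
  have "(SUP y\<in>\<Omega>. \<integral>\<^sup>+ x\<in>\<Omega>. ennreal (Cfun \<rho> \<eta> x * \<rho> ((1 / \<eta> x) *\<^sub>R (x - y))) \<partial>lebesgue) \<le> ennreal c"
    by (rule SUP_least) (rule bound)
  also have "\<dots> < \<infinity>" by simp
  finally show ?thesis .
qed

lemma dir2:
  fixes \<Omega> :: "'a::euclidean_space set" and \<rho> \<eta> :: "'a \<Rightarrow> real"
  assumes Om[measurable]: "\<Omega> \<in> sets borel"
    and rm[measurable]: "\<rho> \<in> borel_measurable borel"
    and em[measurable]: "\<eta> \<in> borel_measurable borel"
    and rnn: "\<And>x. 0 \<le> \<rho> x" and enn: "\<And>x. 0 \<le> \<eta> x"
    and Sfin: "(SUP y\<in>\<Omega>. \<integral>\<^sup>+ x\<in>\<Omega>. ennreal (Cfun \<rho> \<eta> x * \<rho> ((1 / \<eta> x) *\<^sub>R (x - y))) \<partial>lebesgue) < \<infinity>"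
  shows "\<exists>c. \<forall>f. set_integrable lebesgue \<Omega> f \<longrightarrow>
              set_integrable lebesgue \<Omega> (Top \<rho> \<eta> \<Omega> f) \<and>
              (LINT x:\<Omega>|lebesgue. \<bar>Top \<rho> \<eta> \<Omega> f x\<bar>) \<le> c * (LINT x:\<Omega>|lebesgue. \<bar>f x\<bar>)"
proof -
  define S where "S = (SUP y\<in>\<Omega>. \<integral>\<^sup>+ x\<in>\<Omega>. ennreal (Cfun \<rho> \<eta> x * \<rho> ((1 / \<eta> x) *\<^sub>R (x - y))) \<partial>lebesgue)"
  define K where "K y = (\<integral>\<^sup>+ x. ennreal (Cfun \<rho> \<eta> x * \<rho> ((1 / \<eta> x) *\<^sub>R (x - y))) * indicator \<Omega> x \<partial>lborel)" for y
  have CM[measurable]: "Cfun \<rho> \<eta> \<in> borel_measurable borel"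
    unfolding Cfun_def[abs_def] by measurable
  have Cnn: "\<And>x. 0 \<le> Cfun \<rho> \<eta> x" using Cfun_nonneg rnn enn by blast
  have KS: "K y \<le> S" if "y \<in> \<Omega>" for y
  proof -
    have "K y = (\<integral>\<^sup>+ x\<in>\<Omega>. ennreal (Cfun \<rho> \<eta> x * \<rho> ((1 / \<eta> x) *\<^sub>R (x - y))) \<partial>lebesgue)"
      unfolding K_def by (simp add: nn_integral_completion)
    also have "\<dots> \<le> S" unfolding S_def by (rule SUP_upper[OF that])
    finally show ?thesis .
  qed
  have Sinf: "S < \<infinity>" using Sfin S_def by simp
  show ?thesis
  proof (intro exI[of _ "enn2real S"] allI impI)
    fix f :: "'a \<Rightarrow> real" assume fi: "set_integrable lebesgue \<Omega> f"
    define F where "F y = indicator \<Omega> y * f y" for y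
    have Fi: "integrable lebesgue F" using fi unfolding set_integrable_def F_def by simp
    then have "F \<in> borel_measurable lebesgue" by auto
    from completion_ex_borel_measurable_real[OF this] obtain g0
      where g0m[measurable]: "g0 \<in> borel_measurable lborel" and g0ae: "AE y in lborel. F y = g0 y"
      by blast
    define g where "g y = indicator \<Omega> y * g0 y" for y
    have gm[measurable]: "g \<in> borel_measurable lborel" unfolding g_def by measurable
    have gae: "AE y in lebesgue. F y = g y"
      apply (rule AE_completion)
      using g0ae by eventually_elim (auto simp: F_def g_def indicator_def)
    define G where "G x = (\<integral> y. \<rho> ((1 / \<eta> x) *\<^sub>R (x - y)) * g y \<partial>lborel)" for x
    have Gm[measurable]: "G \<in> borel_measurable lborel"
      unfolding G_def[abs_def]
      by (rule lborel.borel_measurable_lebesgue_integral) measurable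
    have TG: "Top \<rho> \<eta> \<Omega> f x = Cfun \<rho> \<eta> x * G x" for x
    proof -
      have "(LINT y:\<Omega>|lebesgue. \<rho> ((1 / \<eta> x) *\<^sub>R (x - y)) * f y)
          = (\<integral> y. \<rho> ((1 / \<eta> x) *\<^sub>R (x - y)) * F y \<partial>lebesgue)"
        unfolding set_lebesgue_integral_def F_def by (simp add: mult_ac)
      also have "\<dots> = (\<integral> y. \<rho> ((1 / \<eta> x) *\<^sub>R (x - y)) * g y \<partial>lebesgue)"
      proof (rule integral_cong_AE)
        have kl: "(\<lambda>y. \<rho> ((1 / \<eta> x) *\<^sub>R (x - y))) \<in> borel_measurable lebesgue"
          by (rule measurable_completion) measurable
        have gl: "g \<in> borel_measurable lebesgue" by (rule measurable_completion) (rule gm)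
        show "(\<lambda>y. \<rho> ((1 / \<eta> x) *\<^sub>R (x - y)) * F y) \<in> borel_measurable lebesgue"
          by (intro borel_measurable_times kl \<open>F \<in> borel_measurable lebesgue\<close>)
        show "(\<lambda>y. \<rho> ((1 / \<eta> x) *\<^sub>R (x - y)) * g y) \<in> borel_measurable lebesgue"
          by (intro borel_measurable_times kl gl)
        show "AE y in lebesgue. \<rho> ((1 / \<eta> x) *\<^sub>R (x - y)) * F y = \<rho> ((1 / \<eta> x) *\<^sub>R (x - y)) * g y"
          using gae by eventually_elim simp
      qed
      also have "\<dots> = G x" unfolding G_def
        by (rule integral_completion) measurable
      finally show ?thesis unfolding Top_def by simp
    qed
    have Tm[measurable]: "Top \<rho> \<eta> \<Omega> f \<in> borel_measurable lborel"
      unfolding TG[abs_def] by measurable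
    have pw: "ennreal \<bar>Top \<rho> \<eta> \<Omega> f x\<bar> \<le> (\<integral>\<^sup>+ y. ennreal (Cfun \<rho> \<eta> x * \<rho> ((1 / \<eta> x) *\<^sub>R (x - y))) * ennreal \<bar>g y\<bar> \<partial>lborel)" for x
    proof -
      have "ennreal \<bar>Top \<rho> \<eta> \<Omega> f x\<bar> = ennreal (Cfun \<rho> \<eta> x) * ennreal (norm (G x))"
        using Cnn[of x] by (simp add: TG abs_mult ennreal_mult)
      also have "\<dots> \<le> ennreal (Cfun \<rho> \<eta> x) * (\<integral>\<^sup>+ y. norm (\<rho> ((1 / \<eta> x) *\<^sub>R (x - y)) * g y) \<partial>lborel)"
        unfolding G_def by (intro mult_left_mono norm_integral_le_nn) auto
      also have "\<dots> = (\<integral>\<^sup>+ y. ennreal (Cfun \<rho> \<eta> x) * norm (\<rho> ((1 / \<eta> x) *\<^sub>R (x - y)) * g y) \<partial>lborel)"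
        by (rule nn_integral_cmult[symmetric]) measurable
      also have "\<dots> = (\<integral>\<^sup>+ y. ennreal (Cfun \<rho> \<eta> x * \<rho> ((1 / \<eta> x) *\<^sub>R (x - y))) * ennreal \<bar>g y\<bar> \<partial>lborel)"
        using Cnn[of x] rnn by (intro nn_integral_cong) (simp add: abs_mult ennreal_mult mult.assoc)
      finally show ?thesis .
    qed
    have gint: "(\<integral>\<^sup>+ y. ennreal \<bar>g y\<bar> \<partial>lborel) = ennreal (LINT y:\<Omega>|lebesgue. \<bar>f y\<bar>)"
    proof -
      have "(\<integral>\<^sup>+ y. ennreal \<bar>g y\<bar> \<partial>lborel) = (\<integral>\<^sup>+ y. ennreal \<bar>g y\<bar> \<partial>lebesgue)"
        by (simp add: nn_integral_completion)
      also have "\<dots> = (\<integral>\<^sup>+ y. ennreal \<bar>F y\<bar> \<partial>lebesgue)"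
        apply (rule nn_integral_cong_AE) using gae by eventually_elim simp
      also have "\<dots> = ennreal (\<integral> y. \<bar>F y\<bar> \<partial>lebesgue)"
        by (rule nn_integral_eq_integral) (use Fi in auto)
      also have "(\<integral> y. \<bar>F y\<bar> \<partial>lebesgue) = (LINT y:\<Omega>|lebesgue. \<bar>f y\<bar>)"
        unfolding set_lebesgue_integral_def F_def by (simp add: abs_mult)
      finally show ?thesis .
    qed
    have fub: "(\<integral>\<^sup>+ x. ennreal \<bar>Top \<rho> \<eta> \<Omega> f x\<bar> * indicator \<Omega> x \<partial>lebesgue) \<le> S * ennreal (LINT y:\<Omega>|lebesgue. \<bar>f y\<bar>)"
    proof -
      have "(\<integral>\<^sup>+ x. ennreal \<bar>Top \<rho> \<eta> \<Omega> f x\<bar> * indicator \<Omega> x \<partial>lebesgue)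
          = (\<integral>\<^sup>+ x. ennreal \<bar>Top \<rho> \<eta> \<Omega> f x\<bar> * indicator \<Omega> x \<partial>lborel)"
        by (simp add: nn_integral_completion)
      also have "\<dots> \<le> (\<integral>\<^sup>+ x. (\<integral>\<^sup>+ y. ennreal (Cfun \<rho> \<eta> x * \<rho> ((1 / \<eta> x) *\<^sub>R (x - y))) * ennreal \<bar>g y\<bar> \<partial>lborel) * indicator \<Omega> x \<partial>lborel)"
        by (intro nn_integral_mono mult_right_mono pw) auto
      also have "\<dots> = (\<integral>\<^sup>+ x. (\<integral>\<^sup>+ y. ennreal (Cfun \<rho> \<eta> x * \<rho> ((1 / \<eta> x) *\<^sub>R (x - y))) * indicator \<Omega> x * ennreal \<bar>g y\<bar> \<partial>lborel) \<partial>lborel)"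
        apply (intro nn_integral_cong)
        apply (subst nn_integral_multc[symmetric])
         apply measurable
        apply (intro nn_integral_cong)
        by (simp add: mult_ac)
      also have "\<dots> = (\<integral>\<^sup>+ y. (\<integral>\<^sup>+ x. ennreal (Cfun \<rho> \<eta> x * \<rho> ((1 / \<eta> x) *\<^sub>R (x - y))) * indicator \<Omega> x * ennreal \<bar>g y\<bar> \<partial>lborel) \<partial>lborel)"
        by (rule lborel_pair.Fubini'[symmetric]) measurable
      also have "\<dots> = (\<integral>\<^sup>+ y. K y * ennreal \<bar>g y\<bar> \<partial>lborel)"
        unfolding K_def
        by (intro nn_integral_cong nn_integral_multc) measurable
      also have "\<dots> \<le> (\<integral>\<^sup>+ y. S * ennreal \<bar>g y\<bar> \<partial>lborel)"
      proof (intro nn_integral_mono)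
        fix y show "K y * ennreal \<bar>g y\<bar> \<le> S * ennreal \<bar>g y\<bar>"
        proof (cases "y \<in> \<Omega>")
          case True then show ?thesis using KS by (intro mult_right_mono) auto
        next
          case False then show ?thesis by (simp add: g_def)
        qed
      qed
      also have "\<dots> = S * ennreal (LINT y:\<Omega>|lebesgue. \<bar>f y\<bar>)"
        by (subst nn_integral_cmult) (auto simp: gint)
      finally show ?thesis .
    qed
    have nTm: "(\<lambda>x. indicator \<Omega> x *\<^sub>R Top \<rho> \<eta> \<Omega> f x) \<in> borel_measurable lebesgue"
      by (rule measurable_completion) measurable
    have eqn: "(\<integral>\<^sup>+ x. ennreal (norm (indicator \<Omega> x *\<^sub>R Top \<rho> \<eta> \<Omega> f x)) \<partial>lebesgue)
        = (\<integral>\<^sup>+ x. ennreal \<bar>Top \<rho> \<eta> \<Omega> f x\<bar> * indicator \<Omega> x \<partial>lebesgue)"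
      by (intro nn_integral_cong) (simp add: indicator_def)
    have fin: "S * ennreal (LINT y:\<Omega>|lebesgue. \<bar>f y\<bar>) < \<infinity>"
      using Sinf by (simp add: ennreal_mult_less_top)
    show "set_integrable lebesgue \<Omega> (Top \<rho> \<eta> \<Omega> f) \<and>
          (LINT x:\<Omega>|lebesgue. \<bar>Top \<rho> \<eta> \<Omega> f x\<bar>) \<le> enn2real S * (LINT x:\<Omega>|lebesgue. \<bar>f x\<bar>)"
    proof
      show "set_integrable lebesgue \<Omega> (Top \<rho> \<eta> \<Omega> f)"
        unfolding set_integrable_def
        by (rule integrableI_bounded[OF nTm]) (use fub fin eqn in auto)
      have "(LINT x:\<Omega>|lebesgue. \<bar>Top \<rho> \<eta> \<Omega> f x\<bar>)
          = enn2real (\<integral>\<^sup>+ x. ennreal \<bar>Top \<rho> \<eta> \<Omega> f x\<bar> * indicator \<Omega> x \<partial>lebesgue)"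
        unfolding set_lebesgue_integral_def
      proof (subst integral_eq_nn_integral)
        have Tl: "Top \<rho> \<eta> \<Omega> f \<in> borel_measurable lebesgue" by (rule measurable_completion) (rule Tm)
        have Ol: "\<Omega> \<in> sets lebesgue" using Om by simp
        show "(\<lambda>x. indicator \<Omega> x *\<^sub>R \<bar>Top \<rho> \<eta> \<Omega> f x\<bar>) \<in> borel_measurable lebesgue"
          by (intro borel_measurable_scaleR borel_measurable_indicator borel_measurable_abs Tl Ol)
        show "AE x in lebesgue. 0 \<le> indicator \<Omega> x *\<^sub>R \<bar>Top \<rho> \<eta> \<Omega> f x\<bar>"
          by (rule AE_I2) (simp add: indicator_def)
        show "enn2real (\<integral>\<^sup>+ x. ennreal (indicator \<Omega> x *\<^sub>R \<bar>Top \<rho> \<eta> \<Omega> f x\<bar>) \<partial>lebesgue) =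
          enn2real (\<integral>\<^sup>+ x. ennreal \<bar>Top \<rho> \<eta> \<Omega> f x\<bar> * indicator \<Omega> x \<partial>lebesgue)"
          by (rule arg_cong[where f=enn2real], intro nn_integral_cong) (simp add: indicator_def)
      qed
      also have "\<dots> \<le> enn2real (S * ennreal (LINT y:\<Omega>|lebesgue. \<bar>f y\<bar>))"
        by (rule enn2real_mono[OF fub]) (use fin in simp)
      also have "\<dots> = enn2real S * (LINT y:\<Omega>|lebesgue. \<bar>f y\<bar>)"
      proof -
        have Lnn: "0 \<le> (LINT y:\<Omega>|lebesgue. \<bar>f y\<bar>)"
          unfolding set_lebesgue_integral_def
          by (intro integral_nonneg_AE AE_I2) (simp add: indicator_def)
        then show ?thesis by (simp add: enn2real_mult)
      qed
      finally show "(LINT x:\<Omega>|lebesgue. \<bar>Top \<rho> \<eta> \<Omega> f x\<bar>) \<le> enn2real S * (LINT x:\<Omega>|lebesgue. \<bar>f x\<bar>)" .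
    qed
  qed
qed

theorem proposition5p1:
  fixes \<Omega> :: "'a::euclidean_space set" and \<rho> \<eta> :: "'a \<Rightarrow> real"
  assumes "open \<Omega>" and "bounded \<Omega>"
    and rho_smooth: "smooth_fun \<rho>"
    and rho_bounds: "\<And>x. 0 \<le> \<rho> x \<and> \<rho> x \<le> 1"
    and rho_zero: "\<And>x. \<rho> x = 0 \<longleftrightarrow> norm x \<ge> 1"
    and rho_radial: "\<And>x z. norm x = norm z \<Longrightarrow> \<rho> x = \<rho> z"
    and rho_half: "\<And>x z. norm x < 1/2 \<Longrightarrow> norm z = 1/2 \<Longrightarrow> \<rho> x \<ge> \<rho> z"
    and eta_smooth: "smooth_fun \<eta>"
    and eta_nonneg: "\<And>x. \<eta> x \<ge> 0"
    and eta_zero: "{x. \<eta> x = 0} = frontier \<Omega>"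
    and eta_flat: "\<And>vs x. x \<in> frontier \<Omega> \<Longrightarrow> iter_dderiv \<eta> vs x = 0"
    and eta_dist: "\<And>x. x \<notin> frontier \<Omega> \<Longrightarrow> \<eta> x < infdist x (frontier \<Omega>)"
  shows "(\<exists>c. \<forall>f. set_integrable lebesgue \<Omega> f \<longrightarrow>
              set_integrable lebesgue \<Omega> (Top \<rho> \<eta> \<Omega> f) \<and>
              (LINT x:\<Omega>|lebesgue. \<bar>Top \<rho> \<eta> \<Omega> f x\<bar>) \<le> c * (LINT x:\<Omega>|lebesgue. \<bar>f x\<bar>))
         \<longleftrightarrow>
         (SUP y\<in>\<Omega>. \<integral>\<^sup>+ x\<in>\<Omega>. ennreal (Cfun \<rho> \<eta> x * \<rho> ((1 / \<eta> x) *\<^sub>R (x - y))) \<partial>lebesgue) < \<infinity>"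
proof
  assume H: "\<exists>c. \<forall>f. set_integrable lebesgue \<Omega> f \<longrightarrow>
              set_integrable lebesgue \<Omega> (Top \<rho> \<eta> \<Omega> f) \<and>
              (LINT x:\<Omega>|lebesgue. \<bar>Top \<rho> \<eta> \<Omega> f x\<bar>) \<le> c * (LINT x:\<Omega>|lebesgue. \<bar>f x\<bar>)"
  show "(SUP y\<in>\<Omega>. \<integral>\<^sup>+ x\<in>\<Omega>. ennreal (Cfun \<rho> \<eta> x * \<rho> ((1 / \<eta> x) *\<^sub>R (x - y))) \<partial>lebesgue) < \<infinity>"
    by (rule dir1[OF assms(1) smooth_cont[OF rho_smooth] _ _ H]) (use rho_bounds in auto)
next
  assume S: "(SUP y\<in>\<Omega>. \<integral>\<^sup>+ x\<in>\<Omega>. ennreal (Cfun \<rho> \<eta> x * \<rho> ((1 / \<eta> x) *\<^sub>R (x - y))) \<partial>lebesgue) < \<infinity>"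
  show "\<exists>c. \<forall>f. set_integrable lebesgue \<Omega> f \<longrightarrow>
              set_integrable lebesgue \<Omega> (Top \<rho> \<eta> \<Omega> f) \<and>
              (LINT x:\<Omega>|lebesgue. \<bar>Top \<rho> \<eta> \<Omega> f x\<bar>) \<le> c * (LINT x:\<Omega>|lebesgue. \<bar>f x\<bar>)"
    by (rule dir2[OF _ smooth_meas[OF rho_smooth] smooth_meas[OF eta_smooth] _ eta_nonneg S])
      (use assms(1) rho_bounds in auto)
qed

end
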